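(* Let $q$ be a prime with $q \equiv 1 \pmod 6$ or $q = 3$, and let $s$ be an integer with $\Phi_6(s) \equiv 0 \pmod q$ or $\Phi_3(s) \equiv 0 \pmod q$, where $\Phi_3(x)=x^2+x+1$, $\Phi_4(x)=x^2+1$, $\Phi_6(x)=x^2-x+1$. Define \begin{align*} f_1(x) &= qx^2+(2s+1)x+\Phi_3(s)/q, & f_2(x) &= q^2x^2+(2s-1)qx+\Phi_6(s),\\ f_3(x) &= q^2x^2+(2s+1)qx+\Phi_3(s), & f_4(x) &= qx^2+(2s-1)x+\Phi_6(s)/q. \end{align*} Then for all $x\in\mathbb{Z}$, \[ \Phi_6(\Phi_4(qx+s)) = \begin{cases} q\,f_1(x)f_2(x), & \text{if } q \mid \Phi_3(s),\\ q\,f_3(x)f_4(x), & \text{if } q \mid \Phi_6(s),\end{cases} \] and (in each case in which they have integer coefficients) the polynomials $f_1, f_2, f_3, f_4$ are irreducible over $\mathbb{Z}$.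
   Context: A polynomial in $\mathbb{Z}[x]$ is called irreducible over $\mathbb{Z}$ if it is not a product of two non-constant polynomials with integer coefficients. *)

theory Defs
  imports "HOL-Computational_Algebra.Polynomial"
begin

definition Phi3 :: "int \<Rightarrow> int" where "Phi3 x = x^2 + x + 1"
definition Phi4 :: "int \<Rightarrow> int" where "Phi4 x = x^2 + 1"
definition Phi6 :: "int \<Rightarrow> int" where "Phi6 x = x^2 - x + 1"

definition irreducible_over_Z :: "int poly \<Rightarrow> bool" where
  "irreducible_over_Z p \<longleftrightarrow>
     \<not> (\<exists>g h :: int poly. degree g > 0 \<and> degree h > 0 \<and> p = g * h)"

text \<open>f1 and f4 are only meaningful (integer coefficients) when q divides
  Phi3 s resp. Phi6 s; then div is exact division.\<close>
definition f1 :: "int \<Rightarrow> int \<Rightarrow> int poly" where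
  "f1 q s = [: Phi3 s div q, 2*s + 1, q :]"
definition f2 :: "int \<Rightarrow> int \<Rightarrow> int poly" where
  "f2 q s = [: Phi6 s, (2*s - 1) * q, q^2 :]"
definition f3 :: "int \<Rightarrow> int \<Rightarrow> int poly" where
  "f3 q s = [: Phi3 s, (2*s + 1) * q, q^2 :]"
definition f4 :: "int \<Rightarrow> int \<Rightarrow> int poly" where
  "f4 q s = [: Phi6 s div q, 2*s - 1, q :]"

end

theory Submission
  imports Defs
begin

lemma quad_irred:
  fixes a b c :: int
  assumes c: "c \<noteq> 0" and d: "b^2 - 4*a*c < 0"
  shows "irreducible_over_Z [:a, b, c:]"
  unfolding irreducible_over_Z_def
proof
  assume "\<exists>g h :: int poly. degree g > 0 \<and> degree h > 0 \<and> [:a, b, c:] = g * h"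
  then obtain g h :: "int poly" where g: "degree g > 0" and h: "degree h > 0"
    and p: "[:a, b, c:] = g * h" by blast
  have "g \<noteq> 0" "h \<noteq> 0" using g h by auto
  hence "degree (g*h) = degree g + degree h" by (rule degree_mult_eq)
  moreover have "degree [:a,b,c:] = 2" using c by simp
  ultimately have dd: "degree g + degree h = 2" using p by simp
  hence "degree g = 1" "degree h = 1" using g h by linarith+
  then obtain g1 g0 h1 h0 where gg: "g = [:g0, g1:]" and hh: "h = [:h0, h1:]"
    by (metis degree1_coeffs)
  have "[:a, b, c:] = [:g0*h0, g0*h1 + g1*h0, g1*h1:]" using p gg hh
    by (simp add: algebra_simps)
  hence "a = g0*h0" "b = g0*h1 + g1*h0" "c = g1*h1" by auto
  hence "b^2 - 4*a*c = (g0*h1 - g1*h0)^2" by (simp add: power2_eq_square algebra_simps)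
  thus False using d by (metis not_less zero_le_power2)
qed

theorem lemma1:
  fixes q s :: int
  assumes "prime q"
    and "q mod 6 = 1 \<or> q = 3"
    and "q dvd Phi6 s \<or> q dvd Phi3 s"
  shows "(\<forall>x::int.
            (q dvd Phi3 s \<longrightarrow>
               Phi6 (Phi4 (q*x + s)) = q * poly (f1 q s) x * poly (f2 q s) x) \<and>
            (q dvd Phi6 s \<longrightarrow>
               Phi6 (Phi4 (q*x + s)) = q * poly (f3 q s) x * poly (f4 q s) x))
       \<and> (q dvd Phi3 s \<longrightarrow> irreducible_over_Z (f1 q s))
       \<and> irreducible_over_Z (f2 q s)
       \<and> irreducible_over_Z (f3 q s)
       \<and> (q dvd Phi6 s \<longrightarrow> irreducible_over_Z (f4 q s))"
proof -
  have q0: "q \<noteq> 0" using assms(1) by auto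
  have id: "Phi6 (Phi4 y) = Phi3 y * Phi6 y" for y
    unfolding Phi6_def Phi4_def Phi3_def by (simp add: power2_eq_square algebra_simps)
  have e3: "Phi3 (q*x+s) = poly (f3 q s) x" for x
    unfolding Phi3_def f3_def by (simp add: power2_eq_square algebra_simps)
  have e2: "Phi6 (q*x+s) = poly (f2 q s) x" for x
    unfolding Phi6_def f2_def by (simp add: power2_eq_square algebra_simps)
  have e1: "q dvd Phi3 s \<Longrightarrow> q * poly (f1 q s) x = poly (f3 q s) x" for x
    unfolding f1_def f3_def by (simp add: power2_eq_square algebra_simps)
  have e4: "q dvd Phi6 s \<Longrightarrow> q * poly (f4 q s) x = poly (f2 q s) x" for x
    unfolding f4_def f2_def by (simp add: power2_eq_square algebra_simps)
  have P1: "\<forall>x::int.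
            (q dvd Phi3 s \<longrightarrow>
               Phi6 (Phi4 (q*x + s)) = q * poly (f1 q s) x * poly (f2 q s) x) \<and>
            (q dvd Phi6 s \<longrightarrow>
               Phi6 (Phi4 (q*x + s)) = q * poly (f3 q s) x * poly (f4 q s) x)"
  proof (intro allI conjI impI)
    fix x
    assume "q dvd Phi3 s"
    thus "Phi6 (Phi4 (q*x + s)) = q * poly (f1 q s) x * poly (f2 q s) x"
      using id e1 e2 e3 by simp
  next
    fix x
    assume "q dvd Phi6 s"
    thus "Phi6 (Phi4 (q*x + s)) = q * poly (f3 q s) x * poly (f4 q s) x"
      using id e4 e2 e3 by (simp add: mult.assoc)
  qed
  have I2: "irreducible_over_Z (f2 q s)" unfolding f2_def
    by (rule quad_irred) (use q0 in \<open>auto simp: zero_less_mult_iff Phi6_def power2_eq_square algebra_simps\<close>)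
  have I3: "irreducible_over_Z (f3 q s)" unfolding f3_def
    by (rule quad_irred) (use q0 in \<open>auto simp: zero_less_mult_iff Phi3_def power2_eq_square algebra_simps\<close>)
  have I1: "irreducible_over_Z (f1 q s)" if "q dvd Phi3 s"
  proof -
    have "4 * (Phi3 s div q) * q = 4 * Phi3 s" using that by simp
    thus ?thesis unfolding f1_def
      by (intro quad_irred) (use q0 in \<open>auto simp: zero_less_mult_iff Phi3_def power2_eq_square algebra_simps\<close>)
  qed
  have I4: "irreducible_over_Z (f4 q s)" if "q dvd Phi6 s"
  proof -
    have "4 * (Phi6 s div q) * q = 4 * Phi6 s" using that by simp
    thus ?thesis unfolding f4_def
      by (intro quad_irred) (use q0 in \<open>auto simp: zero_less_mult_iff Phi6_def power2_eq_square algebra_simps\<close>)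
  qed
  show ?thesis using P1 I1 I2 I3 I4 by blast
qed

end
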